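(* Let $X$ be an L-space and $Y$ its spatial part. (1) If $X$ is a zero-dimensional L-space, then $Y$ is a zero-dimensional topological space. (2) If $X$ is an SL-space, then $X$ is a zero-dimensional L-space if and only if $Y$ is zero-dimensional.
   Context: A Priestley space is a Stone space $X$ with a partial order such that clopen upsets separate points. An L-space is a Priestley space in which the downset of each clopen set is clopen and the closure of each open upset is open. ${\sf ClopUp}(X)$ is the set of clopen upsets. The spatial part of $X$ is $Y=\{y\in X\mid{\downarrow}y\text{ is clopen}\}$, topologized by declaring $V\subseteq Y$ open iff $V=U\cap Y$ for some $U\in{\sf ClopUp}(X)$. $X$ is an SL-space if $Y$ is dense in $X$. A biset is a set that is both an upset and a downset; ${\sf ClopBi}(X)$ is the set of clopen bisets; for $U\in{\sf ClopUp}(X)$, $\mathrm{cen}\,U=\bigcup\{V\in{\sf ClopBi}(X)\mid V\subseteq U\}$. $X$ is a zero-dimensional L-space if $\mathrm{cen}\,U$ is dense in $U$ for every $U\in{\sf ClopUp}(X)$. A topological space is zero-dimensional if it has a basis of clopen sets. *)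

theory Defs
  imports "HOL-Analysis.Analysis"
begin

definition partial_order_on_carrier :: "'a topology \<Rightarrow> ('a \<Rightarrow> 'a \<Rightarrow> bool) \<Rightarrow> bool" where
  "partial_order_on_carrier T le \<longleftrightarrow>
     (\<forall>x\<in>topspace T. le x x) \<and>
     (\<forall>x\<in>topspace T. \<forall>y\<in>topspace T. le x y \<and> le y x \<longrightarrow> x = y) \<and>
     (\<forall>x\<in>topspace T. \<forall>y\<in>topspace T. \<forall>z\<in>topspace T. le x y \<and> le y z \<longrightarrow> le x z)"

definition clopen_in :: "'a topology \<Rightarrow> 'a set \<Rightarrow> bool" where
  "clopen_in T U \<longleftrightarrow> openin T U \<and> closedin T U"

definition is_upset :: "'a topology \<Rightarrow> ('a \<Rightarrow> 'a \<Rightarrow> bool) \<Rightarrow> 'a set \<Rightarrow> bool" where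
  "is_upset T le U \<longleftrightarrow> U \<subseteq> topspace T \<and> (\<forall>x\<in>U. \<forall>y\<in>topspace T. le x y \<longrightarrow> y \<in> U)"

definition is_downset :: "'a topology \<Rightarrow> ('a \<Rightarrow> 'a \<Rightarrow> bool) \<Rightarrow> 'a set \<Rightarrow> bool" where
  "is_downset T le U \<longleftrightarrow> U \<subseteq> topspace T \<and> (\<forall>x\<in>U. \<forall>y\<in>topspace T. le y x \<longrightarrow> y \<in> U)"

definition downset_of :: "'a topology \<Rightarrow> ('a \<Rightarrow> 'a \<Rightarrow> bool) \<Rightarrow> 'a set \<Rightarrow> 'a set" where
  "downset_of T le S = {x \<in> topspace T. \<exists>s\<in>S. le x s}"

definition Stone_space :: "'a topology \<Rightarrow> bool" where
  "Stone_space T \<longleftrightarrow> compact_space T \<and> Hausdorff_space T \<and> T dim_le 0"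

definition Priestley_space :: "'a topology \<Rightarrow> ('a \<Rightarrow> 'a \<Rightarrow> bool) \<Rightarrow> bool" where
  "Priestley_space T le \<longleftrightarrow> Stone_space T \<and> partial_order_on_carrier T le \<and>
     (\<forall>x\<in>topspace T. \<forall>y\<in>topspace T. \<not> le x y \<longrightarrow>
        (\<exists>U. clopen_in T U \<and> is_upset T le U \<and> x \<in> U \<and> y \<notin> U))"

definition L_space :: "'a topology \<Rightarrow> ('a \<Rightarrow> 'a \<Rightarrow> bool) \<Rightarrow> bool" where
  "L_space T le \<longleftrightarrow> Priestley_space T le \<and>
     (\<forall>U. clopen_in T U \<longrightarrow> clopen_in T (downset_of T le U)) \<and>
     (\<forall>U. openin T U \<and> is_upset T le U \<longrightarrow> openin T (T closure_of U))"

definition ClopUp :: "'a topology \<Rightarrow> ('a \<Rightarrow> 'a \<Rightarrow> bool) \<Rightarrow> 'a set set" where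
  "ClopUp T le = {U. clopen_in T U \<and> is_upset T le U}"

definition ClopBi :: "'a topology \<Rightarrow> ('a \<Rightarrow> 'a \<Rightarrow> bool) \<Rightarrow> 'a set set" where
  "ClopBi T le = {U. clopen_in T U \<and> is_upset T le U \<and> is_downset T le U}"

definition cen :: "'a topology \<Rightarrow> ('a \<Rightarrow> 'a \<Rightarrow> bool) \<Rightarrow> 'a set \<Rightarrow> 'a set" where
  "cen T le U = \<Union>{V \<in> ClopBi T le. V \<subseteq> U}"

definition spatial_part :: "'a topology \<Rightarrow> ('a \<Rightarrow> 'a \<Rightarrow> bool) \<Rightarrow> 'a set" where
  "spatial_part T le = {y \<in> topspace T. clopen_in T (downset_of T le {y})}"

text \<open>Topology on the spatial part: open sets are the traces U \<inter> Y of clopen upsets U.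
  We take the topology generated by these traces; in an L-space the traces are
  already closed under arbitrary unions and finite intersections, so this is
  exactly the family of traces.\<close>
definition spatial_topology :: "'a topology \<Rightarrow> ('a \<Rightarrow> 'a \<Rightarrow> bool) \<Rightarrow> 'a topology" where
  "spatial_topology T le =
     topology_generated_by {U \<inter> spatial_part T le | U. U \<in> ClopUp T le}"

definition SL_space :: "'a topology \<Rightarrow> ('a \<Rightarrow> 'a \<Rightarrow> bool) \<Rightarrow> bool" where
  "SL_space T le \<longleftrightarrow> L_space T le \<and> T closure_of (spatial_part T le) = topspace T"

definition zero_dim_L_space :: "'a topology \<Rightarrow> ('a \<Rightarrow> 'a \<Rightarrow> bool) \<Rightarrow> bool" where
  "zero_dim_L_space T le \<longleftrightarrow> L_space T le \<and>
     (\<forall>U \<in> ClopUp T le. U \<subseteq> T closure_of (cen T le U))"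

end

theory Submission
  imports Defs
begin

lemma clopen_Int: "clopen_in T A \<Longrightarrow> clopen_in T B \<Longrightarrow> clopen_in T (A \<inter> B)"
  unfolding clopen_in_def by auto

lemma ClopUp_Int: "A \<in> ClopUp T le \<Longrightarrow> B \<in> ClopUp T le \<Longrightarrow> A \<inter> B \<in> ClopUp T le"
  unfolding ClopUp_def is_upset_def clopen_in_def by auto

lemma gen_open_aux:
  assumes "generate_topology_on {U \<inter> Y | U. U \<in> ClopUp T le} W"
  shows "\<forall>y\<in>W. \<exists>A\<in>ClopUp T le. y \<in> A \<and> A \<inter> Y \<subseteq> W"
  using assms
proof (induction rule: generate_topology_on.induct)
  case Empty
  then show ?case by simp
next
  case (Int a b)
  show ?case
  proof
    fix y assume "y \<in> a \<inter> b"
    then obtain A B where "A \<in> ClopUp T le" "y \<in> A" "A \<inter> Y \<subseteq> a"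
      "B \<in> ClopUp T le" "y \<in> B" "B \<inter> Y \<subseteq> b" using Int.IH by blast
    then show "\<exists>A\<in>ClopUp T le. y \<in> A \<and> A \<inter> Y \<subseteq> a \<inter> b"
      by (intro bexI[of _ "A \<inter> B"]) (auto intro: ClopUp_Int)
  qed
next
  case (UN K)
  show ?case
  proof
    fix y assume "y \<in> \<Union>K"
    then obtain k where k: "k \<in> K" "y \<in> k" by blast
    then obtain A where "A \<in> ClopUp T le" "y \<in> A" "A \<inter> Y \<subseteq> k" using UN.IH by blast
    then show "\<exists>A\<in>ClopUp T le. y \<in> A \<and> A \<inter> Y \<subseteq> \<Union>K" using k by blast
  qed
next
  case (Basis s)
  then show ?case by blast
qed

lemma spatial_open:
  assumes "openin (spatial_topology T le) W" "y \<in> W"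
  shows "\<exists>A\<in>ClopUp T le. y \<in> A \<and> A \<inter> spatial_part T le \<subseteq> W"
  using gen_open_aux[OF openin_topology_generated_by[OF assms(1)[unfolded spatial_topology_def]]] assms(2)
  by blast

lemma spatial_basic_open:
  assumes "A \<in> ClopUp T le"
  shows "openin (spatial_topology T le) (A \<inter> spatial_part T le)"
  unfolding spatial_topology_def openin_topology_generated_by_iff
  using assms by (auto intro: generate_topology_on.Basis)

lemma topspace_in_ClopUp: "topspace T \<in> ClopUp T le"
  unfolding ClopUp_def clopen_in_def is_upset_def by auto

lemma spatial_part_sub: "spatial_part T le \<subseteq> topspace T"
  unfolding spatial_part_def by auto

lemma topspace_spatial: "topspace (spatial_topology T le) = spatial_part T le"
proof -
  have "\<Union>{U \<inter> spatial_part T le | U. U \<in> ClopUp T le} = spatial_part T le"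
    using topspace_in_ClopUp[of T le] spatial_part_sub[of T le] by blast
  then show ?thesis unfolding spatial_topology_def by simp
qed

lemma clopen_basic:
  assumes "V \<in> ClopBi T le"
  shows "closedin (spatial_topology T le) (V \<inter> spatial_part T le) \<and>
         openin (spatial_topology T le) (V \<inter> spatial_part T le)"
proof -
  have V: "V \<in> ClopUp T le" using assms unfolding ClopBi_def ClopUp_def by auto
  have C: "topspace T - V \<in> ClopUp T le"
  proof -
    have c: "openin T V" "closedin T V" and d: "is_downset T le V"
      using assms unfolding ClopBi_def clopen_in_def by auto
    have "openin T (topspace T - V)" using c(2) by (simp add: closedin_def)
    moreover have "closedin T (topspace T - V)" using c(1) by (rule closedin_diff[OF closedin_topspace])
    moreover have "is_upset T le (topspace T - V)"
      unfolding is_upset_def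
    proof (intro conjI ballI impI)
      fix x y assume "x \<in> topspace T - V" "y \<in> topspace T" "le x y"
      then show "y \<in> topspace T - V" using d unfolding is_downset_def by blast
    qed auto
    ultimately show ?thesis unfolding ClopUp_def clopen_in_def by auto
  qed
  have eq: "topspace (spatial_topology T le) - V \<inter> spatial_part T le
       = (topspace T - V) \<inter> spatial_part T le"
    using topspace_spatial[of T le] spatial_part_sub[of T le] by auto
  show ?thesis
    unfolding closedin_def using spatial_basic_open[OF C] spatial_basic_open[OF V] eq
      topspace_spatial[of T le] by auto
qed

lemma L_zero_dim: "L_space T le \<Longrightarrow> T dim_le 0"
  unfolding L_space_def Priestley_space_def Stone_space_def by auto

lemma L_refl: "L_space T le \<Longrightarrow> x \<in> topspace T \<Longrightarrow> le x x"
  unfolding L_space_def Priestley_space_def partial_order_on_carrier_def by auto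

lemma part1:
  assumes L: "L_space T le" and Z: "zero_dim_L_space T le"
  shows "(spatial_topology T le) dim_le 0"
  unfolding dimension_le_0_neighbourhood_base_of_clopen neighbourhood_base_of
    neighbourhood_base_at_def
proof (intro allI impI conjI)
  fix G y assume Gy: "openin (spatial_topology T le) G \<and> y \<in> G"
  have Go: "openin (spatial_topology T le) G" and yG: "y \<in> G" using Gy by auto
  obtain A where A: "A \<in> ClopUp T le" "y \<in> A" "A \<inter> spatial_part T le \<subseteq> G"
    using spatial_open[OF Go yG] by (elim bexE conjE)
  have "G \<subseteq> spatial_part T le"
    using openin_subset[OF Go] unfolding topspace_spatial .
  then have yY: "y \<in> spatial_part T le" using yG by (rule subsetD)
  then have yX: "y \<in> topspace T" and dy: "clopen_in T (downset_of T le {y})"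
    unfolding spatial_part_def by auto
  have "A \<subseteq> T closure_of (cen T le A)" using Z A(1) unfolding zero_dim_L_space_def by auto
  then have "y \<in> T closure_of (cen T le A)" using A(2) by auto
  moreover have "openin T (downset_of T le {y} \<inter> A)"
    using dy A(1) unfolding clopen_in_def ClopUp_def by auto
  moreover have "y \<in> downset_of T le {y} \<inter> A"
    using A(2) yX L_refl[OF L yX] unfolding downset_of_def by auto
  ultimately obtain z where z: "z \<in> cen T le A" "z \<in> downset_of T le {y}"
    unfolding in_closure_of by blast
  then obtain V where V: "V \<in> ClopBi T le" "V \<subseteq> A" "z \<in> V"
    unfolding cen_def by blast
  have "y \<in> V" using V z(2) yX unfolding ClopBi_def is_upset_def downset_of_def by auto
  show "\<exists>U V. openin (spatial_topology T le) U \<and>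
              (closedin (spatial_topology T le) V \<and> openin (spatial_topology T le) V) \<and>
              y \<in> U \<and> U \<subseteq> V \<and> V \<subseteq> G"
    apply (rule exI[of _ "V \<inter> spatial_part T le"], rule exI[of _ "V \<inter> spatial_part T le"])
    using clopen_basic[OF V(1)] \<open>y \<in> V\<close> yY V(2) A(3) by auto
qed


lemma dim0_base:
  assumes "X dim_le 0" "openin X W" "x \<in> W"
  obtains U V where "openin X U" "closedin X V" "openin X V" "x \<in> U" "U \<subseteq> V" "V \<subseteq> W"
proof -
  have "neighbourhood_base_of (\<lambda>U. closedin X U \<and> openin X U) X"
    using assms(1) dimension_le_0_neighbourhood_base_of_clopen by blast
  then have "\<exists>U V. openin X U \<and> (closedin X V \<and> openin X V) \<and> x \<in> U \<and> U \<subseteq> V \<and> V \<subseteq> W"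
    unfolding neighbourhood_base_of using assms(2,3) by blast
  then show ?thesis using that by blast
qed

lemma dense_open:
  assumes S: "SL_space T le" and G: "openin T G" "G \<inter> spatial_part T le = {}"
  shows "G = {}"
proof -
  have "G \<inter> T closure_of (spatial_part T le) \<subseteq> T closure_of (G \<inter> spatial_part T le)"
    by (rule openin_Int_closure_of_subset[OF G(1)])
  then show ?thesis using S G openin_subset[OF G(1)] unfolding SL_space_def by auto
qed

lemma open_sub_closed:
  assumes S: "SL_space T le" and G: "openin T G" and C: "closedin T U"
    and sub: "G \<inter> spatial_part T le \<subseteq> U"
  shows "G \<subseteq> U"
proof -
  have "G \<inter> T closure_of (spatial_part T le) \<subseteq> T closure_of (G \<inter> spatial_part T le)"
    by (rule openin_Int_closure_of_subset[OF G(1)])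
  also have "\<dots> \<subseteq> U" using closure_of_minimal[OF sub C] .
  finally show ?thesis using S openin_subset[OF G] unfolding SL_space_def by auto
qed

lemma closure_upset:
  assumes L: "L_space T le" and B: "is_upset T le B"
  shows "is_upset T le (T closure_of B)"
  unfolding is_upset_def
proof (intro conjI ballI impI)
  show "T closure_of B \<subseteq> topspace T" by (rule closure_of_subset_topspace)
  fix x z assume x: "x \<in> T closure_of B" and z: "z \<in> topspace T" and xz: "le x z"
  show "z \<in> T closure_of B"
  proof (rule ccontr)
    assume nz: "z \<notin> T closure_of B"
    have "openin T (topspace T - T closure_of B)" by auto
    moreover have "z \<in> topspace T - T closure_of B" using z nz by auto
    ultimately obtain U V where UV: "openin T U" "closedin T V" "openin T V" "z \<in> U" "U \<subseteq> V"
      "V \<subseteq> topspace T - T closure_of B"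
      by (rule dim0_base[OF L_zero_dim[OF L]])
    have "clopen_in T (downset_of T le V)"
      using L UV unfolding L_space_def clopen_in_def by blast
    then have op: "openin T (downset_of T le V)" unfolding clopen_in_def by auto
    have xt: "x \<in> topspace T" using x closure_of_subset_topspace[of T B] by blast
    have "x \<in> downset_of T le V" unfolding downset_of_def using xt xz UV by auto
    then obtain b where b: "b \<in> B" "b \<in> downset_of T le V"
      using x op unfolding in_closure_of by blast
    then obtain c where c: "c \<in> V" "le b c" unfolding downset_of_def by auto
    have "c \<in> B" using B b c UV(6) unfolding is_upset_def by auto
    moreover have "B \<subseteq> T closure_of B" using B closure_of_subset unfolding is_upset_def by blast
    ultimately show False using c UV(6) by auto
  qed
qed

lemma union_upset:
  assumes "\<And>A. A \<in> F \<Longrightarrow> is_upset T le A"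
  shows "is_upset T le (\<Union>F)"
  using assms unfolding is_upset_def by blast

lemma part2:
  assumes S: "SL_space T le" and Z: "(spatial_topology T le) dim_le 0"
  shows "zero_dim_L_space T le"
proof -
  have L: "L_space T le" using S unfolding SL_space_def by auto
  define Y where "Y = spatial_part T le"
  have topY: "topspace (spatial_topology T le) = Y" unfolding Y_def by (rule topspace_spatial)
  have Yt: "Y \<subseteq> topspace T" unfolding Y_def by (rule spatial_part_sub)
  have "U \<subseteq> T closure_of (cen T le U)" if U: "U \<in> ClopUp T le" for U
  proof
    fix x assume xU: "x \<in> U"
    have Uo: "openin T U" and Uc: "closedin T U" and Uu: "is_upset T le U"
      using U unfolding ClopUp_def clopen_in_def by auto
    have xt: "x \<in> topspace T" using xU openin_subset[OF Uo] by auto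
    show "x \<in> T closure_of (cen T le U)"
      unfolding in_closure_of
    proof (intro conjI allI impI xt)
      fix N assume N: "x \<in> N \<and> openin T N"
      have "openin T (N \<inter> U)" using N Uo by auto
      moreover have "N \<inter> U \<noteq> {}" using N xU by auto
      ultimately obtain y where y: "y \<in> N" "y \<in> U" "y \<in> Y"
        using dense_open[OF S] unfolding Y_def by blast
      have "openin (spatial_topology T le) (U \<inter> Y)"
        unfolding Y_def by (rule spatial_basic_open[OF U])
      moreover have "y \<in> U \<inter> Y" using y by auto
      ultimately obtain U' W where W: "openin (spatial_topology T le) U'"
        "closedin (spatial_topology T le) W" "openin (spatial_topology T le) W"
        "y \<in> U'" "U' \<subseteq> W" "W \<subseteq> U \<inter> Y"
        by (rule dim0_base[OF Z])
      have W2: "openin (spatial_topology T le) (Y - W)"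
        using W(2) topY unfolding closedin_def by auto
      define AW where "AW = \<Union>{A \<in> ClopUp T le. A \<inter> Y \<subseteq> W}"
      define B where "B = \<Union>{A \<in> ClopUp T le. A \<inter> Y \<subseteq> Y - W}"
      have yAW: "y \<in> AW" unfolding AW_def
        using spatial_open[OF W(3), of y] W(4,5) unfolding Y_def by blast
      have cov: "Y \<subseteq> AW \<union> B"
      proof
        fix v assume v: "v \<in> Y"
        show "v \<in> AW \<union> B"
        proof (cases "v \<in> W")
          case True then show ?thesis unfolding AW_def
            using spatial_open[OF W(3), of v] unfolding Y_def by blast
        next
          case False then show ?thesis unfolding B_def
            using spatial_open[OF W2, of v] v unfolding Y_def by blast
        qed
      qed
      have AWo: "openin T AW" unfolding AW_def
        by (rule openin_Union) (auto simp: ClopUp_def clopen_in_def)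
      have Bo: "openin T B" unfolding B_def
        by (rule openin_Union) (auto simp: ClopUp_def clopen_in_def)
      have AWu: "is_upset T le AW" unfolding AW_def
        by (rule union_upset) (auto simp: ClopUp_def)
      have Bu: "is_upset T le B" unfolding B_def
        by (rule union_upset) (auto simp: ClopUp_def)
      have disj: "AW \<inter> B = {}"
      proof -
        have "A \<inter> A' = {}" if A: "A \<in> ClopUp T le" "A \<inter> Y \<subseteq> W"
          and A': "A' \<in> ClopUp T le" "A' \<inter> Y \<subseteq> Y - W" for A A'
        proof (rule dense_open[OF S])
          show "openin T (A \<inter> A')" using A A' unfolding ClopUp_def clopen_in_def by auto
          show "A \<inter> A' \<inter> spatial_part T le = {}" using A A' unfolding Y_def by blast
        qed
        then show ?thesis unfolding AW_def B_def by blast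
      qed
      define CA where "CA = T closure_of AW"
      define CB where "CB = T closure_of B"
      have CAo: "openin T CA" using L AWo AWu unfolding CA_def L_space_def by blast
      have CBo: "openin T CB" using L Bo Bu unfolding CB_def L_space_def by blast
      have CAc: "closedin T CA" and CBc: "closedin T CB" unfolding CA_def CB_def by auto
      have CAu: "is_upset T le CA" unfolding CA_def by (rule closure_upset[OF L AWu])
      have CBu: "is_upset T le CB" unfolding CB_def by (rule closure_upset[OF L Bu])
      have "B \<inter> CA \<subseteq> T closure_of (B \<inter> AW)"
        unfolding CA_def by (rule openin_Int_closure_of_subset[OF Bo])
      then have d1: "B \<inter> CA = {}" using disj by (auto simp: Int_commute)
      have "CA \<inter> CB \<subseteq> T closure_of (CA \<inter> B)"
        unfolding CB_def by (rule openin_Int_closure_of_subset[OF CAo])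
      then have d2: "CA \<inter> CB = {}" using d1 by (auto simp: Int_commute)
      have AWt: "AW \<subseteq> topspace T" and Bt: "B \<subseteq> topspace T"
        using AWo Bo openin_subset by auto
      have "Y \<subseteq> CA \<union> CB" using cov closure_of_subset[OF AWt] closure_of_subset[OF Bt]
        unfolding CA_def CB_def by blast
      then have "T closure_of Y \<subseteq> CA \<union> CB"
        by (rule closure_of_minimal) (use CAc CBc in auto)
      then have full: "topspace T \<subseteq> CA \<union> CB" using S unfolding SL_space_def Y_def by auto
      have CAd: "is_downset T le CA" unfolding is_downset_def
      proof (intro conjI ballI impI)
        show "CA \<subseteq> topspace T" using openin_subset[OF CAo] .
        fix a b assume a: "a \<in> CA" and b: "b \<in> topspace T" and ba: "le b a"
        show "b \<in> CA"
        proof (rule ccontr)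
          assume "b \<notin> CA"
          then have "b \<in> CB" using full b by auto
          then have "a \<in> CB" using CBu a ba openin_subset[OF CAo] unfolding is_upset_def by auto
          then show False using a d2 by auto
        qed
      qed
      have AWU: "AW \<subseteq> U"
      proof -
        have "A \<subseteq> U" if A: "A \<in> ClopUp T le" "A \<inter> Y \<subseteq> W" for A
          by (rule open_sub_closed[OF S _ Uc]) (use A W(6) in \<open>auto simp: ClopUp_def clopen_in_def Y_def\<close>)
        then show ?thesis unfolding AW_def by blast
      qed
      have CAU: "CA \<subseteq> U" unfolding CA_def by (rule closure_of_minimal[OF AWU Uc])
      have "CA \<in> ClopBi T le" unfolding ClopBi_def clopen_in_def using CAo CAc CAu CAd by auto
      moreover have "y \<in> CA" using yAW closure_of_subset[OF AWt] unfolding CA_def by auto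
      ultimately have "y \<in> cen T le U" unfolding cen_def using CAU by blast
      then show "\<exists>y. y \<in> cen T le U \<and> y \<in> N" using y by blast
    qed
  qed
  then show ?thesis unfolding zero_dim_L_space_def using L by blast
qed

theorem theorem5p16:
  fixes T :: "'a topology" and le :: "'a \<Rightarrow> 'a \<Rightarrow> bool"
  assumes "L_space T le"
  shows "(zero_dim_L_space T le \<longrightarrow> (spatial_topology T le) dim_le 0)
       \<and> (SL_space T le \<longrightarrow> (zero_dim_L_space T le \<longleftrightarrow> (spatial_topology T le) dim_le 0))"
  using part1[OF assms] part2 by blast

end
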